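(* Let $q\in\mathbb{C}$ with $|q|<1$ and let $\mathbf{s}=(s_1,\dots,s_d)\in\mathbb{Z}^d$. Then: (i) $\zeta_q^{\mathrm{I}}[\mathbf{s}]$ converges if $s_1+\dots+s_j>j$ for all $j=1,\dots,d$; (ii) $\zeta_q^{\mathrm{II}}[\mathbf{s}]$ converges if $s_1+\dots+s_j>0$ for all $j=1,\dots,d$; (iii) $\zeta_q^{\mathrm{III}}[\mathbf{s}]$ always converges; (iv) $\zeta_q^{\mathrm{IV}}[\mathbf{s}]$ converges if $s_1+\dots+s_j>1$ for all $j=1,\dots,d$.
   Context: For integer tuples $\mathbf{t}=(t_1,\dots,t_d)$, $\mathbf{s}=(s_1,\dots,s_d)$ and $|q|<1$ define $$\zeta_q^{\mathbf{t}}[\mathbf{s}]=(1-q)^{s_1+\dots+s_d}\sum_{k_1>\dots>k_d>0}\frac{q^{k_1t_1+\dots+k_dt_d}}{(1-q^{k_1})^{s_1}\cdots(1-q^{k_d})^{s_d}}.$$ Then $\zeta_q^{\mathrm{I}}[\mathbf{s}]:=\zeta_q^{(s_1-1,\dots,s_d-1)}[\mathbf{s}]$, $\zeta_q^{\mathrm{II}}[\mathbf{s}]:=\zeta_q^{(s_1,\dots,s_d)}[\mathbf{s}]$, $\zeta_q^{\mathrm{III}}[\mathbf{s}]:=\zeta_q^{(1,0,\dots,0)}[\mathbf{s}]$, $\zeta_q^{\mathrm{IV}}[\mathbf{s}]:=\zeta_q^{(s_1-1,s_2,\dots,s_d)}[\mathbf{s}]$. *)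

theory Defs
  imports "HOL-Analysis.Analysis"
begin

definition qmzv_index :: "nat \<Rightarrow> nat list set" where
  "qmzv_index d = {k. length k = d \<and> sorted_wrt (>) k \<and> (\<forall>x\<in>set k. 0 < x)}"

definition qmzv_term :: "int list \<Rightarrow> int list \<Rightarrow> complex \<Rightarrow> nat list \<Rightarrow> complex" where
  "qmzv_term t s q k =
     (\<Prod>i<length s. q powi (int (k ! i) * t ! i) / (1 - q ^ (k ! i)) powi (s ! i))"

text \<open>Convergence of zeta_q^t[s]: the multiple series converges (unconditionally,
  which for complex series is absolute convergence).\<close>
definition qmzv_converges :: "int list \<Rightarrow> int list \<Rightarrow> complex \<Rightarrow> bool" where
  "qmzv_converges t s q \<longleftrightarrow> qmzv_term t s q summable_on qmzv_index (length s)"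

definition qmzv :: "int list \<Rightarrow> int list \<Rightarrow> complex \<Rightarrow> complex" where
  "qmzv t s q = (1 - q) powi (sum_list s) * infsum (qmzv_term t s q) (qmzv_index (length s))"

definition tI :: "int list \<Rightarrow> int list" where "tI s = map (\<lambda>x. x - 1) s"
definition tII :: "int list \<Rightarrow> int list" where "tII s = s"
definition tIII :: "int list \<Rightarrow> int list" where
  "tIII s = (case s of [] \<Rightarrow> [] | _ # xs \<Rightarrow> 1 # map (\<lambda>_. 0) xs)"
definition tIV :: "int list \<Rightarrow> int list" where
  "tIV s = (case s of [] \<Rightarrow> [] | x # xs \<Rightarrow> (x - 1) # xs)"

end

theory Submission
  imports Defs
begin



lemma geom_list_summable:
  fixes \<rho> :: real
  assumes "0 \<le> \<rho>" "\<rho> < 1"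
  shows "(\<lambda>k. \<rho> ^ sum_list k) summable_on {k::nat list. length k = d}"
proof (induction d)
  case 0
  have "{k::nat list. length k = 0} = {[]}" by auto
  then show ?case by simp
next
  case (Suc d)
  define S where "S = infsum (\<lambda>k. \<rho> ^ sum_list k) {k::nat list. length k = d}"
  have hs: "((\<lambda>k. \<rho> ^ sum_list k) has_sum S) {k::nat list. length k = d}"
    using Suc unfolding S_def by (simp add: summable_iff_has_sum_infsum)
  have g: "(\<lambda>x. \<rho> ^ x * S) summable_on UNIV"
  proof -
    have "(\<lambda>x::nat. \<rho> ^ x) summable_on UNIV"
      using assms by (subst summable_on_UNIV_nonneg_real_iff) (auto intro: summable_geometric)
    then show ?thesis by (rule summable_on_cmult_left)
  qed
  have "(\<lambda>(x, xs). \<rho> ^ x * \<rho> ^ sum_list xs) summable_on (UNIV \<times> {k::nat list. length k = d})"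
    apply (rule summable_on_SigmaI[where g = "\<lambda>x. \<rho> ^ x * S"])
    using hs g assms by (auto intro: has_sum_cmult_right)
  moreover have "inj_on (\<lambda>(x, xs). x # xs) (UNIV \<times> {k::nat list. length k = d})"
    by (auto simp: inj_on_def)
  moreover have "{k::nat list. length k = Suc d} = (\<lambda>(x, xs). x # xs) ` (UNIV \<times> {k::nat list. length k = d})"
    by (auto simp: length_Suc_conv image_iff)
  ultimately show ?case
    by (simp add: summable_on_reindex o_def case_prod_unfold power_add)
qed

lemma abel_bound:
  fixes k :: "nat list" and t :: "int list"
  assumes "length k = length t" "k \<noteq> []" "sorted_wrt (>) k"
    "\<forall>j\<in>{1..length t}. sum_list (take j t) \<ge> 1"
  shows "int (hd k) \<le> sum_list (map2 (\<lambda>a b. int a * b) k t)"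
  using assms
proof (induction k arbitrary: t)
  case Nil then show ?case by simp
next
  case (Cons a k')
  show ?case
  proof (cases k')
    case Nil
    then obtain u where t: "t = [u]" using Cons.prems by (cases t) auto
    have "u \<ge> 1" using Cons.prems(4) t by (auto dest: bspec[of _ _ 1])
    then show ?thesis using t Nil by (simp add: mult_le_cancel_left1) 
  next
    case (Cons b rest)
    then obtain u v tr where t: "t = u # v # tr" using Cons.prems(1) \<open>k' = b # rest\<close>
      by (cases t; cases "tl t") auto
    have u1: "u \<ge> 1" using Cons.prems(4) t by (auto dest: bspec[of _ _ 1])
    have ab: "b < a" using Cons.prems(3) \<open>k' = b # rest\<close> by auto
    have pre: "\<forall>j\<in>{1..length ((u+v) # tr)}. sum_list (take j ((u+v) # tr)) \<ge> 1"
    proof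
      fix j assume j: "j \<in> {1..length ((u+v) # tr)}"
      then obtain j' where j': "j = Suc j'" by (cases j) auto
      have "Suc j \<in> {1..length t}" using j t by auto
      then have "sum_list (take (Suc j) t) \<ge> 1" using Cons.prems(4) by blast
      then show "sum_list (take j ((u+v) # tr)) \<ge> 1" using t j' by simp
    qed
    have IH: "int b \<le> sum_list (map2 (\<lambda>a b. int a * b) k' ((u+v) # tr))"
      using Cons.IH[of "(u+v) # tr"] Cons.prems pre t \<open>k' = b # rest\<close> by auto
    have "sum_list (map2 (\<lambda>a b. int a * b) (a # k') t)
        = (int a - int b) * u + sum_list (map2 (\<lambda>a b. int a * b) k' ((u+v) # tr))"
      using t \<open>k' = b # rest\<close> by (simp add: algebra_simps)
    moreover have "(int a - int b) * u \<ge> int a - int b" using u1 ab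
      by (simp add: mult_le_cancel_left1)
    ultimately show ?thesis using IH by simp
  qed
qed


lemma sum_list_le_len:
  fixes xs :: "nat list"
  shows "(\<forall>x\<in>set xs. x \<le> c) \<Longrightarrow> sum_list xs \<le> length xs * c"
  by (induction xs) auto

lemma powi_lower:
  fixes c m :: real
  assumes "0 < m" "m \<le> c" "c \<le> 1 / m"
  shows "m ^ nat \<bar>n\<bar> \<le> c powi n"
proof (cases "n \<ge> 0")
  case True
  then have "c powi n = c ^ nat n" by (simp add: power_int_def)
  moreover have "m ^ nat n \<le> c ^ nat n" using assms by (intro power_mono) auto
  ultimately show ?thesis using True by simp
next
  case False
  then have "c powi n = inverse c ^ nat (- n)" by (simp add: power_int_def)
  moreover have "m \<le> inverse c"
    using assms by (simp add: field_simps inverse_eq_divide)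
  then have "m ^ nat (-n) \<le> inverse c ^ nat (- n)" using assms by (intro power_mono) auto
  ultimately show ?thesis using False by simp
qed

lemma prod_powi:
  fixes x :: real
  assumes "finite A" "x \<noteq> 0"
  shows "(\<Prod>i\<in>A. x powi f i) = x powi (\<Sum>i\<in>A. f i)"
  using assms by (induction A rule: finite_induct) (auto simp: power_int_add)

lemma main_conv:
  fixes q :: complex and s t :: "int list"
  assumes q: "norm q < 1" and len: "length t = length s"
    and pos: "\<forall>j\<in>{1..length s}. sum_list (take j t) > 0"
  shows "qmzv_converges t s q"
proof -
  define d where "d = length s"
  show ?thesis
  proof (cases "d = 0")
    case True
    then have "qmzv_index (length s) = {[]}" unfolding qmzv_index_def d_def by auto
    then show ?thesis unfolding qmzv_converges_def by simp
  next
    case dpos: False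
    have t0: "t ! 0 > 0"
    proof -
      have "1 \<in> {1..length s}" using dpos d_def by (auto simp: Suc_le_eq)
      then have "sum_list (take 1 t) > 0" using pos by blast
      moreover have "take 1 t = [t ! 0]" using dpos d_def len by (cases t) auto
      ultimately show ?thesis by simp
    qed
    show ?thesis
    proof (cases "q = 0")
      case True
      have "qmzv_term t s q k = 0" if k: "k \<in> qmzv_index (length s)" for k
      proof -
        have "k ! 0 > 0" using k dpos d_def unfolding qmzv_index_def
          by (auto simp: nth_mem)
        then have "int (k ! 0) * t ! 0 > 0" using t0 by simp
        then have "q powi (int (k ! 0) * t ! 0) = 0" using True by (simp add: power_int_def)
        then show ?thesis unfolding qmzv_term_def using dpos d_def
          by (intro prod_zero) (auto intro!: bexI[of _ 0])
      qed
      then show ?thesis unfolding qmzv_converges_def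
        by (subst summable_on_cong[where g = "\<lambda>_. 0"]) auto
    next
      case qnz: False
      define r where "r = norm q"
      have r0: "r > 0" "r < 1" using qnz q r_def by auto
      define m where "m = 1 - r"
      have m0: "m > 0" using r0 m_def by simp
      define \<rho> where "\<rho> = r powr (1 / real d)"
      have \<rho>0: "0 < \<rho>" "\<rho> < 1"
        using r0 dpos unfolding \<rho>_def by (auto intro: powr_less_mono2[of _ r 1, simplified])
      define B where "B = (\<Prod>i<d. (1/m) ^ nat \<bar>s ! i\<bar>)"
      have bound: "norm (qmzv_term t s q k) \<le> B * \<rho> ^ sum_list k"
        if k: "k \<in> qmzv_index (length s)" for k
      proof -
        have klen: "length k = d" and ksort: "sorted_wrt (>) k" and kpos: "\<forall>x\<in>set k. 0 < x"
          using k unfolding qmzv_index_def d_def by auto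
        define e where "e = (\<lambda>i. int (k ! i) * t ! i)"
        have c_bd: "m \<le> norm (1 - q ^ (k ! i)) \<and> norm (1 - q ^ (k ! i)) \<le> 1 / m" if i: "i < d" for i
        proof -
          have ki: "k ! i \<ge> 1" using kpos klen i by (auto simp: nth_mem Suc_le_eq)
          have nq: "norm (q ^ (k ! i)) \<le> r"
          proof -
            have "norm (q ^ (k ! i)) = r ^ (k ! i)" by (simp add: r_def norm_power)
            also have "\<dots> \<le> r ^ 1" using ki r0 by (intro power_decreasing) auto
            finally show ?thesis by simp
          qed
          have "norm (1 - q ^ (k ! i)) \<ge> 1 - norm (q ^ (k ! i))"
            by (metis norm_one norm_triangle_ineq2)
          moreover have "norm (1 - q ^ (k ! i)) \<le> 1 + norm (q ^ (k ! i))"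
            by (metis norm_one norm_triangle_ineq4)
          moreover have "1 + r \<le> 1 / m" using r0 m0 unfolding m_def
            by (simp add: field_simps)
          ultimately show ?thesis using nq m_def by auto
        qed
        have fac: "norm (q powi e i / (1 - q ^ (k ! i)) powi (s ! i))
                    \<le> r powi e i * (1/m) ^ nat \<bar>s ! i\<bar>" if i: "i < d" for i
        proof -
          let ?c = "norm (1 - q ^ (k ! i))"
          have lo: "m ^ nat \<bar>s ! i\<bar> \<le> ?c powi (s ! i)"
            using c_bd[OF i] m0 by (intro powi_lower) auto
          have mp: "m ^ nat \<bar>s ! i\<bar> > 0" using m0 by simp
          have "norm (q powi e i / (1 - q ^ (k ! i)) powi (s ! i)) = r powi e i / ?c powi (s ! i)"
            by (simp add: norm_divide norm_power_int r_def)
          also have "\<dots> \<le> r powi e i / m ^ nat \<bar>s ! i\<bar>"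
            using lo mp r0 by (intro divide_left_mono) auto
          also have "\<dots> = r powi e i * (1/m) ^ nat \<bar>s ! i\<bar>"
            by (metis power_one_over times_divide_eq_right mult.right_neutral)
          finally show ?thesis .
        qed
        have "norm (qmzv_term t s q k) = (\<Prod>i<d. norm (q powi e i / (1 - q ^ (k ! i)) powi (s ! i)))"
          unfolding qmzv_term_def e_def d_def by (simp add: prod_norm)
        also have "\<dots> \<le> (\<Prod>i<d. r powi e i * (1/m) ^ nat \<bar>s ! i\<bar>)"
          using fac by (intro prod_mono) auto
        also have "\<dots> = r powi (\<Sum>i<d. e i) * B"
          unfolding B_def prod.distrib using r0 by (simp add: prod_powi)
        finally have n1: "norm (qmzv_term t s q k) \<le> r powi (\<Sum>i<d. e i) * B" .
        have Esum: "(\<Sum>i<d. e i) = sum_list (map2 (\<lambda>a b. int a * b) k t)"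
          unfolding e_def using klen len d_def
          by (simp add: sum_list_sum_nth atLeast0LessThan)
        have hdk: "int (hd k) \<le> (\<Sum>i<d. e i)"
          unfolding Esum using klen len d_def dpos ksort pos
          by (intro abel_bound) auto
        have "\<forall>x\<in>set k. x \<le> hd k"
          using ksort dpos klen by (cases k) auto
        then have "sum_list k \<le> d * hd k" using sum_list_le_len klen by metis
        then have a1: "real (sum_list k) \<le> real d * real (hd k)" by (metis of_nat_le_iff of_nat_mult)
        have a2: "real (hd k) \<le> real_of_int (\<Sum>i<d. e i)" using hdk by (metis of_int_le_iff of_int_of_nat_eq)
        have dp: "real d > 0" using dpos by simp
        have "real (sum_list k) / real d \<le> real (hd k)"
          using a1 dp by (simp add: pos_divide_le_eq mult.commute)
        then have sk: "real (sum_list k) / real d \<le> real_of_int (\<Sum>i<d. e i)"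
          using a2 by linarith
        have "r powi (\<Sum>i<d. e i) = r powr real_of_int (\<Sum>i<d. e i)"
          using r0 by (subst powr_real_of_int') auto
        also have "\<dots> \<le> r powr (real (sum_list k) / real d)"
          using sk r0 by (intro powr_mono') auto
        also have "\<dots> = \<rho> ^ sum_list k"
          unfolding \<rho>_def using r0 by (simp add: powr_powr powr_realpow[symmetric] \<rho>0)
        finally have "r powi (\<Sum>i<d. e i) \<le> \<rho> ^ sum_list k" .
        moreover have "B \<ge> 0" unfolding B_def using m0 by (intro prod_nonneg) auto
        ultimately show ?thesis using n1
          by (smt (verit) mult_right_mono mult.commute)
      qed
      have "(\<lambda>k. \<rho> ^ sum_list k) summable_on {k::nat list. length k = d}"
        using \<rho>0 by (intro geom_list_summable) auto
      then have "(\<lambda>k. B * \<rho> ^ sum_list k) summable_on {k::nat list. length k = d}"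
        by (rule summable_on_cmult_right)
      then have "(\<lambda>k. B * \<rho> ^ sum_list k) summable_on qmzv_index (length s)"
        by (rule summable_on_subset) (auto simp: qmzv_index_def d_def)
      then have "(\<lambda>k. norm (qmzv_term t s q k)) summable_on qmzv_index (length s)"
        by (rule summable_on_comparison_test) (use bound in auto)
      then show ?thesis unfolding qmzv_converges_def by (rule abs_summable_summable)
    qed
  qed
qed

theorem corollary2p2:
  fixes q :: complex and s :: "int list"
  assumes "norm q < 1"
  shows "((\<forall>j\<in>{1..length s}. sum_list (take j s) > int j) \<longrightarrow> qmzv_converges (tI s) s q)
    \<and> ((\<forall>j\<in>{1..length s}. sum_list (take j s) > 0) \<longrightarrow> qmzv_converges (tII s) s q)
    \<and> qmzv_converges (tIII s) s q
    \<and> ((\<forall>j\<in>{1..length s}. sum_list (take j s) > 1) \<longrightarrow> qmzv_converges (tIV s) s q)"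
proof -
  have sm: "sum_list (map (\<lambda>x. x - 1) xs) = sum_list xs - int (length xs)" for xs :: "int list"
    by (induction xs) auto
  have z: "sum_list (map (\<lambda>_. 0::int) xs) = 0" for xs :: "int list"
    by (induction xs) auto
  have I: "qmzv_converges (tI s) s q" if h: "\<forall>j\<in>{1..length s}. sum_list (take j s) > int j"
  proof (rule main_conv[OF assms])
    show "length (tI s) = length s" by (simp add: tI_def)
    show "\<forall>j\<in>{1..length s}. sum_list (take j (tI s)) > 0"
    proof
      fix j assume j: "j \<in> {1..length s}"
      then have "sum_list (take j (tI s)) = sum_list (take j s) - int j"
        by (simp add: tI_def take_map sm)
      then show "sum_list (take j (tI s)) > 0" using h j by auto
    qed
  qed
  have II: "qmzv_converges (tII s) s q" if h: "\<forall>j\<in>{1..length s}. sum_list (take j s) > 0"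
    using main_conv[OF assms, of "tII s"] h by (simp add: tII_def)
  have III: "qmzv_converges (tIII s) s q"
  proof (rule main_conv[OF assms])
    show "length (tIII s) = length s" by (cases s) (auto simp: tIII_def)
    show "\<forall>j\<in>{1..length s}. sum_list (take j (tIII s)) > 0"
    proof
      fix j assume j: "j \<in> {1..length s}"
      then obtain x xs where s: "s = x # xs" by (cases s) auto
      obtain j' where j': "j = Suc j'" using j by (cases j) auto
      show "sum_list (take j (tIII s)) > 0" using s j' by (simp add: tIII_def take_map z)
    qed
  qed
  have IV: "qmzv_converges (tIV s) s q" if h: "\<forall>j\<in>{1..length s}. sum_list (take j s) > 1"
  proof (rule main_conv[OF assms])
    show "length (tIV s) = length s" by (cases s) (auto simp: tIV_def)
    show "\<forall>j\<in>{1..length s}. sum_list (take j (tIV s)) > 0"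
    proof
      fix j assume j: "j \<in> {1..length s}"
      then obtain x xs where s: "s = x # xs" by (cases s) auto
      obtain j' where j': "j = Suc j'" using j by (cases j) auto
      have "sum_list (take j (tIV s)) = sum_list (take j s) - 1" using s j' by (simp add: tIV_def)
      then show "sum_list (take j (tIV s)) > 0" using h j by auto
    qed
  qed
  show ?thesis using I II III IV by blast
qed

end
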